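(* For every integer $n\ge 1$, let \[ R'_n:=\sum_{k=n}^{\infty}\frac{(-1)^{k-1}}{k}. \] Then \begin{align*} R'_{n} =(-1)^{\,n-1}\,(2n-1)!\;\sum_{k=0}^{\infty}\frac{1}{16^{k}}\Bigg[&\frac{1}{(8k+1)_{2n}}+\frac{1}{(8k+2)_{2n}}+\frac{1}{2\,(8k+3)_{2n}}\\ &-\frac{1}{4\,(8k+5)_{2n}}-\frac{1}{4\,(8k+6)_{2n}}-\frac{1}{8\,(8k+7)_{2n}}\Bigg]. \end{align*}
   Context: For a real number $a$ and integer $m\ge 0$, $(a)_m$ denotes the rising factorial (Pochhammer symbol): $(a)_0:=1$ and $(a)_m:=a(a+1)\cdots(a+m-1)=\Gamma(a+m)/\Gamma(a)$. Note $R'_1=\log 2$. *)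

theory Defs
  imports "HOL-Analysis.Analysis"
begin

definition Rtail :: "nat \<Rightarrow> real" where
  "Rtail n = (\<Sum>j. (-1) ^ (n + j - 1) / real (n + j))"

definition bbp_term :: "nat \<Rightarrow> nat \<Rightarrow> real" where
  "bbp_term n k = (1 / 16 ^ k) *
     (  1 / pochhammer (8 * real k + 1) (2 * n)
      + 1 / pochhammer (8 * real k + 2) (2 * n)
      + 1 / (2 * pochhammer (8 * real k + 3) (2 * n))
      - 1 / (4 * pochhammer (8 * real k + 5) (2 * n))
      - 1 / (4 * pochhammer (8 * real k + 6) (2 * n))
      - 1 / (8 * pochhammer (8 * real k + 7) (2 * n)))"

end

theory Submission
  imports Defs
begin

definition bb :: "nat \<Rightarrow> real \<Rightarrow> real" where
  "bb n x = fact (2*n-1) / pochhammer x (2*n)"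

lemma alg_id:
  fixes x r F L :: real
  assumes x: "x > 0" and r: "r > 0" and L: "L \<ge> 0"
  shows "(L+3)*(L+2)*F/(x*(x+1)*(x+3+L)*(x+2+L)*r) =
     F/(x*(x+1)*r) - 2*(F/((x+1)*(x+2+L)*r)) + F/((x+3+L)*(x+2+L)*r)"
proof -
  define a b c where "a = x+1" and "b = x+2+L" and "c = x+3+L"
  have nz: "a \<noteq> 0" "b \<noteq> 0" "c \<noteq> 0" "x \<noteq> 0" "r \<noteq> 0" using x r L unfolding a_def b_def c_def by auto
  have "(L+3)*(L+2)*F/(x*a*c*b*r) = F/(x*a*r) - 2*(F/(a*b*r)) + F/(c*b*r)"
  proof -
    have "F/(x*a*r) - 2*(F/(a*b*r)) + F/(c*b*r) = F*(c*b - 2*x*c + x*a)/(x*a*c*b*r)"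
      using nz by (simp add: field_simps)
    also have "c*b - 2*x*c + x*a = (L+3)*(L+2)" unfolding a_def b_def c_def by (simp add: algebra_simps)
    finally show ?thesis by (simp add: mult.commute mult.left_commute)
  qed
  then show ?thesis unfolding a_def b_def c_def .
qed

lemma bb_rec:
  assumes n: "n \<ge> 1" and x: "x > 0"
  shows "bb (Suc n) x = bb n x - 2 * bb n (x+1) + bb n (x+2)"
proof -
  define l where "l = 2*n-2"
  have l: "2*n = Suc (Suc l)" using n unfolding l_def by simp
  define r where "r = pochhammer (x+2) l"
  have r: "r > 0" unfolding r_def using x by (intro pochhammer_pos) simp
  have p0: "pochhammer x (2*n) = x*(x+1)*r"
    unfolding l r_def by (simp add: pochhammer_rec algebra_simps)
  have p1: "pochhammer (x+1) (2*n) = (x+1)*(x+2+l)*r"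
  proof -
    have "pochhammer (x+1) (Suc (Suc l)) = (x+1) * pochhammer (x+2) (Suc l)"
      by (subst pochhammer_rec) (simp add: add.assoc)
    also have "\<dots> = (x+1)*(x+2+l)*r" unfolding r_def by (subst pochhammer_rec') simp
    finally show ?thesis unfolding l .
  qed
  have p2: "pochhammer (x+2) (2*n) = (x+3+l)*(x+2+l)*r"
    unfolding l r_def by (simp add: pochhammer_rec' algebra_simps)
  have p3: "pochhammer x (2*Suc n) = x*(x+1)*(x+3+l)*(x+2+l)*r"
  proof -
    have "2*Suc n = Suc (Suc (Suc (Suc l)))" using l by simp
    moreover have "pochhammer x (Suc (Suc (Suc (Suc l)))) = x*(x+1)*pochhammer (x+2) (Suc (Suc l))"
      by (simp add: pochhammer_rec add.assoc)
    ultimately show ?thesis using p2 l by simp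
  qed
  have f0: "2*n-1 = Suc l" using l by simp
  have f1: "2*Suc n - 1 = Suc (Suc (Suc l))" using l by simp
  have "bb (Suc n) x = (real l+3)*(real l+2)*fact (Suc l) / (x*(x+1)*(x+3+l)*(x+2+l)*r)"
    unfolding bb_def p3 f1 by (simp add: algebra_simps)
  moreover have "bb n x - 2 * bb n (x+1) + bb n (x+2) =
     fact (Suc l) / (x*(x+1)*r) - 2 * (fact (Suc l) / ((x+1)*(x+2+l)*r)) + fact (Suc l) / ((x+3+l)*(x+2+l)*r)"
    unfolding bb_def p0 p1 p2 f0 by (simp add: add_ac)
  moreover have "(real l+3)*(real l+2)*fact (Suc l) / (x*(x+1)*(x+3+l)*(x+2+l)*r) =
     fact (Suc l) / (x*(x+1)*r) - 2 * (fact (Suc l) / ((x+1)*(x+2+l)*r)) + fact (Suc l) / ((x+3+l)*(x+2+l)*r)"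
    using alg_id[OF x r, of "real l" "fact (Suc l)"] by simp
  ultimately show ?thesis by simp
qed


lemma fact_le_poch: "(1::real) \<le> x \<Longrightarrow> fact m \<le> pochhammer x m"
proof (induction m)
  case 0 then show ?case by simp
next
  case (Suc m)
  have "fact (Suc m) = (1 + real m) * fact m" by simp
  also have "\<dots> \<le> (x + real m) * pochhammer x m"
    using Suc by (intro mult_mono) auto
  finally show ?case by (simp add: pochhammer_rec')
qed

lemma bb_bounds:
  assumes n: "n \<ge> 1" and x: "x \<ge> 1"
  shows "0 < bb n x" "bb n x \<le> 1 / (2 * real n)"
proof -
  have pp: "pochhammer x (2*n) > 0" using x by (intro pochhammer_pos) simp
  show "0 < bb n x" unfolding bb_def using pp by simp
  have ff: "fact (2*n) = (2 * real n) * fact (2*n-1)"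
  proof -
    have "2*n = Suc (2*n-1)" using n by simp
    then have "(fact (2*n) :: real) = fact (Suc (2*n-1))" by metis
    also have "\<dots> = real (Suc (2*n-1)) * fact (2*n-1)" by simp
    also have "real (Suc (2*n-1)) = 2 * real n" using n by (simp add: of_nat_diff)
    finally show ?thesis .
  qed
  have "bb n x \<le> fact (2*n-1) / fact (2*n)"
    unfolding bb_def using fact_le_poch[OF x, of "2*n"] pp
    by (intro divide_left_mono) auto
  also have "\<dots> = 1 / (2 * real n)" unfolding ff using n by simp
  finally show "bb n x \<le> 1 / (2 * real n)" .
qed

lemma bb_one: "n \<ge> 1 \<Longrightarrow> 2 * bb n 1 = 1 / real n"
proof -
  assume n: "n \<ge> 1"
  have "2*n = Suc (2*n-1)" using n by simp
  then have "(fact (2*n) :: real) = fact (Suc (2*n-1))" by metis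
  also have "\<dots> = real (Suc (2*n-1)) * fact (2*n-1)" by simp
  also have "real (Suc (2*n-1)) = 2 * real n" using n by (simp add: of_nat_diff)
  finally have ff: "(fact (2*n) :: real) = 2 * real n * fact (2*n-1)" .
  show ?thesis unfolding bb_def pochhammer_fact[symmetric] ff using n by simp
qed

lemma bbp_bb:
  "fact (2*n-1) * bbp_term n k = (1/16^k) * (bb n (8*real k+1) + bb n (8*real k+2)
     + bb n (8*real k+3)/2 - bb n (8*real k+5)/4 - bb n (8*real k+6)/4 - bb n (8*real k+7)/8)"
  unfolding bbp_term_def bb_def by (simp add: algebra_simps)

lemma block:
  assumes n: "n \<ge> 1"
  shows "fact (2*n-1) * bbp_term n k + fact (2*Suc n-1) * bbp_term (Suc n) k
     = 2 * (1/16^k) * bb n (8*real k+1) - 2 * (1/16^(Suc k)) * bb n (8*real (Suc k)+1)"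
proof -
  define A where "A = 8 * real k"
  have A: "A \<ge> 0" unfolding A_def by simp
  have e1: "bb (Suc n) (A+1) = bb n (A+1) - 2*bb n (A+2) + bb n (A+3)"
    using bb_rec[OF n, of "A+1"] A by (simp add: add.assoc)
  have e2: "bb (Suc n) (A+2) = bb n (A+2) - 2*bb n (A+3) + bb n (A+4)"
    using bb_rec[OF n, of "A+2"] A by (simp add: add.assoc)
  have e3: "bb (Suc n) (A+3) = bb n (A+3) - 2*bb n (A+4) + bb n (A+5)"
    using bb_rec[OF n, of "A+3"] A by (simp add: add.assoc)
  have e5: "bb (Suc n) (A+5) = bb n (A+5) - 2*bb n (A+6) + bb n (A+7)"
    using bb_rec[OF n, of "A+5"] A by (simp add: add.assoc)
  have e6: "bb (Suc n) (A+6) = bb n (A+6) - 2*bb n (A+7) + bb n (A+8)"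
    using bb_rec[OF n, of "A+6"] A by (simp add: add.assoc)
  have e7: "bb (Suc n) (A+7) = bb n (A+7) - 2*bb n (A+8) + bb n (A+9)"
    using bb_rec[OF n, of "A+7"] A by (simp add: add.assoc)
  have lin: "(bb n (A+1) + bb n (A+2) + bb n (A+3)/2 - bb n (A+5)/4 - bb n (A+6)/4 - bb n (A+7)/8)
     + (bb (Suc n) (A+1) + bb (Suc n) (A+2) + bb (Suc n) (A+3)/2 - bb (Suc n) (A+5)/4
        - bb (Suc n) (A+6)/4 - bb (Suc n) (A+7)/8)
     = 2 * bb n (A+1) - bb n (A+9) / 8"
    using e1 e2 e3 e5 e6 e7 by linarith
  have s9: "8*real (Suc k)+1 = A+9" unfolding A_def by simp
  show ?thesis
    unfolding bbp_bb s9 A_def[symmetric]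
    using arg_cong[OF lin, of "\<lambda>z. (1/16^k) * z"] by (simp add: algebra_simps)
qed


lemma c_bound:
  assumes n: "n \<ge> 1"
  shows "\<bar>fact (2*n-1) * bbp_term n k\<bar> \<le> (25/8) / (2 * real n) * (1/16)^k"
proof -
  define B where "B = 1 / (2 * real n)"
  define w where "w = (1::real)/16^k"
  have w: "w > 0" unfolding w_def by simp
  have b: "\<And>j::nat. j \<ge> 1 \<Longrightarrow> 0 \<le> bb n (8*real k + j) \<and> bb n (8*real k + j) \<le> B"
    unfolding B_def using bb_bounds[OF n] by (metis less_imp_le of_nat_1 of_nat_le_iff add_increasing le_add_same_cancel2 of_nat_0_le_iff mult_nonneg_nonneg zero_le_numeral add.commute)
  have b1: "0 \<le> bb n (8*real k + 1) \<and> bb n (8*real k + 1) \<le> B" using b[of 1] by simp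
  have b2: "0 \<le> bb n (8*real k + 2) \<and> bb n (8*real k + 2) \<le> B" using b[of 2] by simp
  have b3: "0 \<le> bb n (8*real k + 3) \<and> bb n (8*real k + 3) \<le> B" using b[of 3] by simp
  have b5: "0 \<le> bb n (8*real k + 5) \<and> bb n (8*real k + 5) \<le> B" using b[of 5] by simp
  have b6: "0 \<le> bb n (8*real k + 6) \<and> bb n (8*real k + 6) \<le> B" using b[of 6] by simp
  have b7: "0 \<le> bb n (8*real k + 7) \<and> bb n (8*real k + 7) \<le> B" using b[of 7] by simp
  define X where "X = bb n (8*real k+1) + bb n (8*real k+2)
     + bb n (8*real k+3)/2 - bb n (8*real k+5)/4 - bb n (8*real k+6)/4 - bb n (8*real k+7)/8"
  have X: "\<bar>X\<bar> \<le> 25/8 * B" unfolding X_def using b1 b2 b3 b5 b6 b7 by (intro abs_leI) linarith+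
  have "\<bar>fact (2*n-1) * bbp_term n k\<bar> = w * \<bar>X\<bar>" unfolding bbp_bb X_def w_def by (simp add: abs_mult)
  also have "\<dots> \<le> w * (25/8 * B)" using X w by (intro mult_left_mono) auto
  finally show ?thesis unfolding w_def B_def by (simp add: power_divide mult.commute)
qed


theorem theorem2:
  fixes n :: nat
  assumes "n \<ge> 1"
  shows "(\<lambda>j. (-1) ^ (n + j - 1) / real (n + j)) sums Rtail n
       \<and> (\<lambda>k. (-1) ^ (n - 1) * fact (2 * n - 1) * bbp_term n k) sums Rtail n"
proof -
  define f :: "nat \<Rightarrow> real" where "f i = (-1) ^ (i - 1) / real i" for i
  have "summable (\<lambda>i. (-1)^i * inverse (real (Suc i)))"
    by (rule summable_Leibniz'(1)[OF LIMSEQ_inverse_real_of_nat])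
       (auto intro!: le_imp_inverse_le)
  moreover have "(\<lambda>i. f (Suc i)) = (\<lambda>i. (-1)^i * inverse (real (Suc i)))"
    unfolding f_def by (simp add: divide_inverse)
  ultimately have sf: "summable f" by (metis summable_Suc_iff)
  have Rt: "Rtail m = (\<Sum>j. f (m + j))" for m unfolding Rtail_def f_def by simp
  have sR: "(\<lambda>j. f (m + j)) sums Rtail m" for m
    unfolding Rt using summable_ignore_initial_segment[OF sf, of m]
    by (simp add: add.commute summable_sums)
  have Rrec: "Rtail m = f m + Rtail (Suc m)" for m
  proof -
    have "(\<Sum>j. f (m + Suc j)) = Rtail m - f m"
      using suminf_split_head[OF sums_summable[OF sR[of m]]] sums_unique[OF sR[of m]] by simp
    then show ?thesis unfolding Rt by simp
  qed
  have Rlim: "Rtail \<longlonglongrightarrow> 0"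
  proof -
    have "Rtail = (\<lambda>m. suminf f - (\<Sum>i<m. f i))"
      unfolding Rt fun_eq_iff using suminf_split_initial_segment[OF sf] by (simp add: add.commute algebra_simps)
    moreover have "(\<lambda>m. suminf f - (\<Sum>i<m. f i)) \<longlonglongrightarrow> suminf f - suminf f"
      by (intro tendsto_diff tendsto_const summable_LIMSEQ sf)
    ultimately show ?thesis by simp
  qed
  define c where "c m k = fact (2*m-1) * bbp_term m k" for m k
  have sc: "summable (c m)" if m: "m \<ge> 1" for m
    by (rule summable_comparison_test'[where N=0, OF summable_mult[OF summable_geometric[of "1/16::real"], of "(25/8)/(2*real m)"]])
       (use c_bound[OF m] in \<open>auto simp: c_def\<close>)
  define T where "T m = suminf (c m)" for m
  have Tb: "\<bar>T m\<bar> \<le> (25/8)/2 * (16/15) / real m" if m: "m \<ge> 1" for m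
  proof -
    have sg: "summable (\<lambda>k. (25/8) / (2 * real m) * (1/16::real)^k)"
      by (intro summable_mult summable_geometric) simp
    have cs: "summable (\<lambda>k. norm (c m k))"
      by (rule summable_comparison_test'[where N=0, OF sg]) (use c_bound[OF m] in \<open>auto simp: c_def\<close>)
    have "\<bar>T m\<bar> \<le> (\<Sum>k. \<bar>c m k\<bar>)" unfolding T_def
      using summable_norm[OF cs] by simp
    also have "\<dots> \<le> (\<Sum>k. (25/8) / (2 * real m) * (1/16::real)^k)"
      using c_bound[OF m] sg sc[OF m]
      by (intro suminf_le) (auto simp: c_def intro: summable_comparison_test'[OF sg])
    also have "\<dots> = (25/8) / (2 * real m) * (16/15)"
      by (subst suminf_mult) (auto simp: suminf_geometric)
    finally show ?thesis using m by (simp add: field_simps)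
  qed
  have Tlim: "T \<longlonglongrightarrow> 0"
    by (rule Lim_null_comparison[OF _ lim_const_over_n[of "(25/8)/2 * (16/15) :: real"]])
       (use Tb in \<open>auto simp: eventually_sequentially intro!: exI[of _ 1]\<close>)
  have Trec: "T m + T (Suc m) = 1 / real m" if m: "m \<ge> 1" for m
  proof -
    define g where "g k = 2 * (1/16^k) * bb m (8*real k+1)" for k
    have gl0: "(\<lambda>k. (1/real m) * (1/16::real)^k) \<longlonglongrightarrow> 0"
      using tendsto_mult[OF tendsto_const LIMSEQ_power_zero[of "1/16::real"], of "1/real m"] by simp
    have gb: "norm (g k) \<le> (1/real m) * (1/16::real)^k" for k
    proof -
      have "0 < bb m (8*real k+1)" "bb m (8*real k+1) \<le> 1/(2*real m)" using bb_bounds[OF m] by auto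
      then have "2 * (1/16^k) * bb m (8*real k+1) \<le> 2 * (1/16^k) * (1/(2*real m))"
        by (intro mult_left_mono) auto
      then show ?thesis using \<open>0 < bb m (8*real k+1)\<close> unfolding g_def by (simp add: power_divide mult.commute)
    qed
    have gl: "g \<longlonglongrightarrow> 0"
      by (rule Lim_null_comparison[OF _ gl0]) (use gb in \<open>auto intro!: always_eventually\<close>)
    have "(\<lambda>k. g k - g (Suc k)) sums (g 0 - 0)" by (rule telescope_sums'[OF gl])
    moreover have "(\<lambda>k. g k - g (Suc k)) = (\<lambda>k. c m k + c (Suc m) k)"
      unfolding g_def c_def using block[OF m] by simp
    moreover have "g 0 = 1 / real m" unfolding g_def using bb_one[OF m] by simp
    ultimately have "(\<lambda>k. c m k + c (Suc m) k) sums (1 / real m)" by simp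
    moreover have "(\<lambda>k. c m k + c (Suc m) k) sums (T m + T (Suc m))"
      unfolding T_def using m by (intro sums_add summable_sums sc) auto
    ultimately show ?thesis using sums_unique2 by blast
  qed
  define D where "D m = Rtail m - (-1)^(m-1) * T m" for m
  have Dstep: "D m = D (Suc m)" if m: "m \<ge> 1" for m
  proof -
    have s: "(-1::real)^(Suc m - 1) = - ((-1)^(m-1))"
      using m by (cases m) auto
    define sg :: real where "sg = (-1)^(m-1)"
    have fm: "f m = sg * (1 / real m)" unfolding f_def sg_def by simp
    have "D m - D (Suc m) = f m - sg * (T m + T (Suc m))"
      unfolding D_def s sg_def[symmetric] using Rrec[of m] by (simp add: algebra_simps)
    also have "\<dots> = 0" unfolding fm Trec[OF m] by simp
    finally show ?thesis by simp
  qed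
  have Dconst: "D (m + n) = D n" for m
  proof (induction m)
    case 0 then show ?case by simp
  next
    case (Suc m)
    have "D (m + n) = D (Suc (m + n))" by (rule Dstep) (use assms in simp)
    then show ?case using Suc by simp
  qed
  have Dlim: "D \<longlonglongrightarrow> 0"
  proof -
    have "(\<lambda>m. (-1::real)^(m-1) * T m) \<longlonglongrightarrow> 0"
      using Tlim by (subst tendsto_norm_zero_iff[symmetric]) (simp add: abs_mult tendsto_rabs_zero_iff)
    then show ?thesis unfolding D_def using tendsto_diff[OF Rlim] by fastforce
  qed
  have "(\<lambda>m. D (m + n)) \<longlonglongrightarrow> 0" using LIMSEQ_ignore_initial_segment[OF Dlim] .
  then have "D n = 0" unfolding Dconst using LIMSEQ_const_iff by blast
  then have RT: "Rtail n = (-1)^(n-1) * T n" unfolding D_def by simp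
  have "(\<lambda>k. (-1)^(n-1) * c n k) sums ((-1)^(n-1) * T n)"
    unfolding T_def using assms by (intro sums_mult summable_sums sc)
  then have "(\<lambda>k. (-1) ^ (n - 1) * fact (2 * n - 1) * bbp_term n k) sums Rtail n"
    unfolding RT c_def by (simp add: mult.assoc)
  moreover have "(\<lambda>j. (-1) ^ (n + j - 1) / real (n + j)) sums Rtail n"
    using sR[of n] unfolding f_def .
  ultimately show ?thesis by blast
qed

end
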